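(* Let $G^\sigma$ be an oriented graph whose underlying graph $G$ is a simple connected graph with $n$ vertices and $m$ edges. Then $$sr(G^\sigma)+\alpha(G)\geqslant 4n-2m-\sqrt{n(n-1)-2m+\tfrac{1}{4}}-\tfrac{5}{2},$$ with equality if and only if $G\cong S_n$ or $G\cong C_3$.
   Context: An oriented graph $G^\sigma$ is obtained from a simple graph $G$ by assigning a direction to each edge. Its skew-adjacency matrix $S(G^\sigma)=[s_{x,y}]$ has $s_{x,y}=1$ if there is an arc from $x$ to $y$, $s_{x,y}=-1$ if there is an arc from $y$ to $x$, and $0$ otherwise; the skew-rank $sr(G^\sigma)$ is the rank of $S(G^\sigma)$. $\alpha(G)$ is the independence number of $G$. $S_n$ denotes the star on $n$ vertices (the single vertex when $n=1$) and $C_3$ the triangle. *)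

theory Defs
  imports "HOL-Analysis.Analysis"
begin

text \<open>An oriented graph on the finite vertex type 'n is given by its arc relation D
  (D x y means an arc from x to y). It is oriented: no pair carries arcs in both
  directions (this also forces irreflexivity, i.e. no loops).\<close>

definition oriented :: "('n \<Rightarrow> 'n \<Rightarrow> bool) \<Rightarrow> bool" where
  "oriented D \<longleftrightarrow> (\<forall>x y. D x y \<longrightarrow> \<not> D y x)"

definition underlying :: "('n \<Rightarrow> 'n \<Rightarrow> bool) \<Rightarrow> 'n \<Rightarrow> 'n \<Rightarrow> bool" where
  "underlying D x y \<longleftrightarrow> D x y \<or> D y x"

definition skew_adj :: "('n::finite \<Rightarrow> 'n \<Rightarrow> bool) \<Rightarrow> real^'n^'n" where
  "skew_adj D = (\<chi> x y. if D x y then 1 else if D y x then -1 else 0)"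

definition skew_rank :: "('n::finite \<Rightarrow> 'n \<Rightarrow> bool) \<Rightarrow> nat" where
  "skew_rank D = rank (skew_adj D)"

text \<open>Graphs on the whole (finite) vertex type, given by symmetric irreflexive E.\<close>
definition connected_graph :: "('n \<Rightarrow> 'n \<Rightarrow> bool) \<Rightarrow> bool" where
  "connected_graph E \<longleftrightarrow> (\<forall>x y. E\<^sup>*\<^sup>* x y)"

definition num_edges :: "('n \<Rightarrow> 'n \<Rightarrow> bool) \<Rightarrow> nat" where
  "num_edges E = card {{x, y} | x y. E x y}"

definition independent_set :: "('n \<Rightarrow> 'n \<Rightarrow> bool) \<Rightarrow> 'n set \<Rightarrow> bool" where
  "independent_set E S \<longleftrightarrow> (\<forall>x\<in>S. \<forall>y\<in>S. \<not> E x y)"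

definition independence_number :: "('n::finite \<Rightarrow> 'n \<Rightarrow> bool) \<Rightarrow> nat" where
  "independence_number E = Max {card S | S. independent_set E S}"

definition graph_iso :: "('n \<Rightarrow> 'n \<Rightarrow> bool) \<Rightarrow> 'b set \<Rightarrow> ('b \<Rightarrow> 'b \<Rightarrow> bool) \<Rightarrow> bool" where
  "graph_iso E V' E' \<longleftrightarrow> (\<exists>f. bij_betw f UNIV V' \<and> (\<forall>x y. E x y \<longleftrightarrow> E' (f x) (f y)))"

text \<open>Star S_k on vertex set {0..<k} with centre 0 (single vertex when k = 1).\<close>
definition star_graph :: "nat \<Rightarrow> nat \<Rightarrow> bool" where
  "star_graph i j \<longleftrightarrow> i \<noteq> j \<and> (i = 0 \<or> j = 0)"

text \<open>Triangle C_3 on vertex set {0..<3}.\<close>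
definition triangle_graph :: "nat \<Rightarrow> nat \<Rightarrow> bool" where
  "triangle_graph i j \<longleftrightarrow> i \<noteq> j"

end

theory Submission
  imports Defs "HOL-Combinatorics.Transposition"
begin

definition rowv :: "('n::finite \<Rightarrow> 'n \<Rightarrow> bool) \<Rightarrow> 'n set \<Rightarrow> 'n \<Rightarrow> real^'n" where
  "rowv D S i = (\<chi> j. if j \<in> S then skew_adj D $ i $ j else 0)"

definition srk :: "('n::finite \<Rightarrow> 'n \<Rightarrow> bool) \<Rightarrow> 'n set \<Rightarrow> nat" where
  "srk D S = dim (rowv D S ` S)"

lemma skew_entry: "skew_adj D $ i $ j = (if D i j then 1 else if D j i then -1 else 0)"
  by (simp add: skew_adj_def)

lemma srk_UNIV: "srk D UNIV = skew_rank D"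
proof -
  have "rowv D UNIV ` UNIV = rows (skew_adj D)"
    by (auto simp: rowv_def rows_def row_def vec_eq_iff)
  then show ?thesis by (simp add: srk_def skew_rank_def row_rank_def)
qed

definition proj :: "'n set \<Rightarrow> real^'n \<Rightarrow> real^'n" where
  "proj S x = (\<chi> j. if j \<in> S then x $ j else 0)"

lemma linear_proj: "linear (proj S)"
  by (rule linearI) (auto simp: proj_def vec_eq_iff)

lemma srk_mono: assumes "S \<subseteq> T" shows "srk D S \<le> srk D T"
proof -
  have "rowv D S ` S = proj S ` (rowv D T ` S)"
    using assms by (auto simp: rowv_def proj_def vec_eq_iff image_image intro!: image_cong)
  also have "dim \<dots> \<le> dim (rowv D T ` S)" by (rule dim_image_le[OF linear_proj])
  also have "\<dots> \<le> dim (rowv D T ` T)" using assms by (intro dim_subset) auto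
  finally show ?thesis by (simp add: srk_def)
qed

lemma span_zero_comp:
  fixes A :: "(real^'n::finite) set"
  assumes "\<forall>x\<in>A. x $ u = 0" shows "\<forall>x\<in>span A. x $ u = 0"
proof -
  have "subspace {x::real^'n. x $ u = 0}" by (auto simp: subspace_def)
  then have "span A \<subseteq> {x. x $ u = 0}" using assms by (intro span_minimal) auto
  then show ?thesis by auto
qed

lemma skew_nz: "oriented D \<Longrightarrow> skew_adj D $ i $ j \<noteq> 0 \<longleftrightarrow> underlying D i j"
  by (auto simp: skew_entry underlying_def oriented_def)

lemma skew_anti: "oriented D \<Longrightarrow> skew_adj D $ i $ j = - skew_adj D $ j $ i"
  by (auto simp: skew_entry oriented_def)

lemma srk_pendant:
  fixes D :: "'n::finite \<Rightarrow> 'n \<Rightarrow> bool"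
  assumes ori: "oriented D" and S: "u \<in> S" "v \<in> S" and uv: "underlying D v u"
    and only: "\<forall>y\<in>S. underlying D v y \<longrightarrow> y = u"
  shows "srk D (S - {u,v}) + 2 \<le> srk D S"
proof -
  define M where "M = skew_adj D"
  define T where "T = S - {u,v}"
  define e where "e = (axis u (1::real) :: real^'n)"
  have neq: "u \<noteq> v" using uv ori by (auto simp: underlying_def oriented_def)
  have Mvu: "M $ v $ u \<noteq> 0" using skew_nz[OF ori] uv by (simp add: M_def)
  have Mz: "M $ i $ j = 0" if "\<not> underlying D i j" for i j
    using skew_nz[OF ori, of i j] that by (simp add: M_def)
  have rv: "rowv D S v = (M $ v $ u) *\<^sub>R e"
  proof -
    have "(rowv D S v) $ j = ((M $ v $ u) *\<^sub>R e) $ j" for j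
    proof (cases "j = u")
      case True then show ?thesis using S by (simp add: rowv_def e_def M_def axis_def)
    next
      case False
      then have "M $ v $ j = 0 \<or> j \<notin> S" using only Mz by blast
      then show ?thesis using False by (auto simp: rowv_def e_def M_def axis_def)
    qed
    then show ?thesis by (simp add: vec_eq_iff)
  qed
  have rT: "rowv D T i = rowv D S i - (M $ i $ u / M $ v $ u) *\<^sub>R rowv D S v" if "i \<in> T" for i
  proof -
    have iu: "i \<noteq> u" "i \<noteq> v" "i \<in> S" using that by (auto simp: T_def)
    have Miv: "M $ i $ v = 0"
      using only iu Mz[of i v] by (auto simp: underlying_def)
    have "rowv D T i $ j = (rowv D S i - (M $ i $ u / M $ v $ u) *\<^sub>R rowv D S v) $ j" for j
      using Mvu Miv S unfolding rv
      by (cases "j = u"; cases "j = v"; simp add: rowv_def T_def M_def e_def axis_def)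
    then show ?thesis by (simp add: vec_eq_iff)
  qed
  have sub: "insert (rowv D S u) (insert e (rowv D T ` T)) \<subseteq> span (rowv D S ` S)"
  proof -
    have "rowv D S v \<in> span (rowv D S ` S)" using S by (intro span_base) auto
    then have "e \<in> span (rowv D S ` S)"
      using span_mul[of "rowv D S v" _ "1 / M $ v $ u"] Mvu by (simp add: rv)
    moreover have "rowv D T i \<in> span (rowv D S ` S)" if "i \<in> T" for i
    proof -
      have "rowv D S i \<in> span (rowv D S ` S)" using that by (intro span_base) (auto simp: T_def)
      then show ?thesis using rT[OF that] \<open>rowv D S v \<in> span (rowv D S ` S)\<close>
        by (simp add: span_diff span_mul)
    qed
    moreover have "rowv D S u \<in> span (rowv D S ` S)" using S by (intro span_base) auto
    ultimately show ?thesis by auto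
  qed
  have z1: "\<forall>x\<in>rowv D T ` T. x $ u = 0" by (auto simp: rowv_def T_def)
  have z2: "\<forall>x\<in>insert e (rowv D T ` T). x $ v = 0" using neq by (auto simp: rowv_def T_def e_def axis_def)
  have "e \<notin> span (rowv D T ` T)" using span_zero_comp[OF z1] by (auto simp: e_def axis_def)
  moreover have "rowv D S u \<notin> span (insert e (rowv D T ` T))"
  proof -
    have "rowv D S u $ v \<noteq> 0" using S skew_nz[OF ori, of u v] uv
      by (auto simp: rowv_def underlying_def)
    then show ?thesis using span_zero_comp[OF z2] by auto
  qed
  ultimately have "dim (insert (rowv D S u) (insert e (rowv D T ` T))) = dim (rowv D T ` T) + 2"
    by (simp add: dim_insert)
  moreover have "dim (insert (rowv D S u) (insert e (rowv D T ` T))) \<le> dim (rowv D S ` S)"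
    using dim_subset[OF sub] by simp
  ultimately show ?thesis by (simp add: srk_def T_def)
qed

definition pc :: "('n::finite \<Rightarrow> 'n \<Rightarrow> bool) \<Rightarrow> 'n set \<Rightarrow> nat" where
  "pc E S = card {(x,y). x \<in> S \<and> y \<in> S \<and> E x y}"

definition alph :: "('n::finite \<Rightarrow> 'n \<Rightarrow> bool) \<Rightarrow> 'n set \<Rightarrow> nat" where
  "alph E S = Max {card T | T. T \<subseteq> S \<and> independent_set E T}"

definition nocross :: "('n \<Rightarrow> 'n \<Rightarrow> bool) \<Rightarrow> 'n set \<Rightarrow> ('n \<Rightarrow> nat) \<Rightarrow> bool" where
  "nocross E S c \<longleftrightarrow> (\<forall>x\<in>S. \<forall>y\<in>S. E x y \<longrightarrow> c x = c y)"

definition om :: "('n::finite \<Rightarrow> 'n \<Rightarrow> bool) \<Rightarrow> 'n set \<Rightarrow> nat" where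
  "om E S = Max {card (c ` S) | c. nocross E S c}"

lemma pc_del:
  fixes E :: "'n::finite \<Rightarrow> 'n \<Rightarrow> bool"
  assumes sym: "\<And>x y. E x y \<Longrightarrow> E y x" and irr: "\<And>x. \<not> E x x" and v: "v \<in> S"
  shows "pc E S = pc E (S - {v}) + 2 * card {y\<in>S. E v y}"
proof -
  let ?N = "{y\<in>S. E v y}"
  have eq: "{(x,y). x \<in> S \<and> y \<in> S \<and> E x y} =
     {(x,y). x \<in> S - {v} \<and> y \<in> S - {v} \<and> E x y} \<union> (Pair v ` ?N \<union> (\<lambda>y. (y,v)) ` ?N)"
  proof (rule set_eqI)
    fix p :: "'n \<times> 'n"
    obtain x y where p: "p = (x,y)" by (cases p)
    show "p \<in> {(x,y). x \<in> S \<and> y \<in> S \<and> E x y} \<longleftrightarrow>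
      p \<in> {(x,y). x \<in> S - {v} \<and> y \<in> S - {v} \<and> E x y} \<union> (Pair v ` ?N \<union> (\<lambda>y. (y,v)) ` ?N)"
    proof (cases "x = v")
      case True then show ?thesis using p v irr by auto
    next
      case False
      have "E x v \<longleftrightarrow> E v x" by (metis sym)
      then show ?thesis using p v False by auto
    qed
  qed
  have c1: "card (Pair v ` ?N) = card ?N" by (rule card_image) (auto simp: inj_on_def)
  have c2: "card ((\<lambda>y. (y,v)) ` ?N) = card ?N" by (rule card_image) (auto simp: inj_on_def)
  have d1: "Pair v ` ?N \<inter> (\<lambda>y. (y,v)) ` ?N = {}" using irr by auto
  have "card (Pair v ` ?N \<union> (\<lambda>y. (y,v)) ` ?N) = 2 * card ?N"
    using card_Un_disjoint[OF _ _ d1] c1 c2 by simp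
  moreover have "card ({(x,y). x \<in> S - {v} \<and> y \<in> S - {v} \<and> E x y} \<union> (Pair v ` ?N \<union> (\<lambda>y. (y,v)) ` ?N))
     = card {(x,y). x \<in> S - {v} \<and> y \<in> S - {v} \<and> E x y} + card (Pair v ` ?N \<union> (\<lambda>y. (y,v)) ` ?N)"
    by (rule card_Un_disjoint) (simp, simp, blast)
  ultimately show ?thesis unfolding pc_def eq by simp
qed

lemma alph_fin: "finite {card T | T. T \<subseteq> S \<and> independent_set E (T::'n::finite set)}"
proof -
  have "{card T | T. T \<subseteq> S \<and> independent_set E T} \<subseteq> card ` (UNIV :: 'n set set)" by auto
  then show ?thesis by (rule finite_subset) simp
qed

lemma alph_ge: "T \<subseteq> S \<Longrightarrow> independent_set E T \<Longrightarrow> card T \<le> alph E (S::'n::finite set)"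
  unfolding alph_def by (rule Max_ge[OF alph_fin]) auto

lemma alph_ex: "\<exists>T. T \<subseteq> S \<and> independent_set E T \<and> card T = alph E (S::'n::finite set)"
proof -
  have "card {} \<in> {card T | T. T \<subseteq> S \<and> independent_set E T}"
    by (auto simp: independent_set_def)
  then have ne: "{card T | T. T \<subseteq> S \<and> independent_set E T} \<noteq> {}" by blast
  have "alph E S \<in> {card T | T. T \<subseteq> S \<and> independent_set E T}"
    unfolding alph_def by (rule Max_in[OF alph_fin ne])
  then obtain T where "alph E S = card T" "T \<subseteq> S" "independent_set E T" by blast
  then show ?thesis by metis
qed

lemma alph_mono: "T \<subseteq> S \<Longrightarrow> alph E T \<le> alph E (S::'n::finite set)"
proof -
  assume TS: "T \<subseteq> S"
  obtain I where "I \<subseteq> T" "independent_set E I" "card I = alph E T" using alph_ex by blast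
  then show ?thesis using alph_ge[of I S E] TS by simp
qed

lemma om_fin: "finite {card (c ` S) | c. nocross E S (c::'n::finite \<Rightarrow> nat)}"
proof -
  have "{card (c ` S) | c. nocross E S c} \<subseteq> {..card S}"
  proof
    fix k assume "k \<in> {card (c ` S) | c. nocross E S (c::'n \<Rightarrow> nat)}"
    then obtain c :: "'n \<Rightarrow> nat" where "k = card (c ` S)" by blast
    moreover have "card (c ` S) \<le> card S" by (rule card_image_le) simp
    ultimately show "k \<in> {..card S}" by simp
  qed
  then show ?thesis by (rule finite_subset) simp
qed

lemma om_ge: "nocross E S c \<Longrightarrow> card (c ` S) \<le> om E (S::'n::finite set)"
  unfolding om_def by (rule Max_ge[OF om_fin]) auto

lemma om_ex: "\<exists>c. nocross E S c \<and> card (c ` S) = om E (S::'n::finite set)"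
proof -
  have "card ((\<lambda>_. 0::nat) ` S) \<in> {card (c ` S) | c. nocross E S c}"
    by (auto simp: nocross_def)
  then have ne: "{card (c ` S) | c. nocross E S c} \<noteq> {}" by blast
  have "om E S \<in> {card (c ` S) | c. nocross E S c}"
    unfolding om_def by (rule Max_in[OF om_fin ne])
  then obtain c where "om E S = card (c ` S)" "nocross E S c" by blast
  then show ?thesis by metis
qed

lemma merge:
  fixes E :: "'n::finite \<Rightarrow> 'n \<Rightarrow> bool"
  assumes sym: "\<And>x y. E x y \<Longrightarrow> E y x"
    and X: "X \<subseteq> S" "X \<noteq> {}" and N: "N \<subseteq> S - X"
    and out: "\<forall>x\<in>X. \<forall>y\<in>S - X. E x y \<longrightarrow> y \<in> N"
    and c: "nocross E (S - X) c"
  shows "card (c ` (S - X)) + 1 \<le> om E S + card (c ` N)"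
proof (cases "N = {}")
  case True
  obtain L :: nat where L: "L \<notin> c ` (S - X)"
  proof -
    have "finite (c ` (S - X))" by (intro finite_imageI) simp
    then show ?thesis using ex_new_if_finite[OF infinite_UNIV_nat] that by blast
  qed
  define c' where "c' x = (if x \<in> X then L else c x)" for x
  have "nocross E S c'"
    unfolding nocross_def
  proof (intro ballI impI)
    fix x y assume xy: "x \<in> S" "y \<in> S" "E x y"
    show "c' x = c' y"
    proof (cases "x \<in> X"; cases "y \<in> X")
      assume "x \<in> X" "y \<notin> X"
      then have "y \<in> N" using out xy by blast
      then show ?thesis using True by simp
    next
      assume "x \<notin> X" "y \<in> X"
      moreover have "E y x" using xy(3) by (rule sym)
      ultimately have "x \<in> N" using out xy by blast
      then show ?thesis using True by simp
    next
      assume nx: "x \<notin> X" "y \<notin> X"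
      then have "c x = c y" using c xy unfolding nocross_def by blast
      then show ?thesis using nx by (simp add: c'_def)
    qed (simp add: c'_def)
  qed
  then have "card (c' ` S) \<le> om E S" by (rule om_ge)
  moreover have "c' ` S = insert L (c ` (S - X))"
    using X by (auto simp: c'_def)
  ultimately show ?thesis using L True by simp
next
  case False
  then obtain n0 where n0: "n0 \<in> N" by auto
  define L where "L = c n0"
  define c' where "c' x = (if x \<in> X \<or> c x \<in> c ` N then L else c x)" for x
  have "nocross E S c'"
    unfolding nocross_def
  proof (intro ballI impI)
    fix x y assume xy: "x \<in> S" "y \<in> S" "E x y"
    show "c' x = c' y"
    proof (cases "x \<in> X"; cases "y \<in> X")
      assume "x \<in> X" "y \<notin> X"
      then have "y \<in> N" using out xy by blast
      then show ?thesis using \<open>x \<in> X\<close> by (auto simp: c'_def)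
    next
      assume "x \<notin> X" "y \<in> X"
      moreover have "E y x" using xy(3) by (rule sym)
      ultimately have "x \<in> N" using out xy by blast
      then show ?thesis using \<open>y \<in> X\<close> by (auto simp: c'_def)
    next
      assume nx: "x \<notin> X" "y \<notin> X"
      then have "c x = c y" using c xy unfolding nocross_def by blast
      then show ?thesis using nx by (simp add: c'_def)
    qed (simp add: c'_def)
  qed
  then have "card (c' ` S) \<le> om E S" by (rule om_ge)
  moreover have "insert L (c ` (S - X) - c ` N) \<subseteq> c' ` S"
  proof
    fix z assume "z \<in> insert L (c ` (S - X) - c ` N)"
    then show "z \<in> c' ` S"
    proof
      assume "z = L" then show ?thesis using X by (auto simp: c'_def)
    next
      assume "z \<in> c ` (S - X) - c ` N"
      then obtain t where "t \<in> S - X" "z = c t" "c t \<notin> c ` N" by auto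
      then show ?thesis by (auto simp: c'_def intro!: image_eqI[of _ _ t])
    qed
  qed
  then have "card (insert L (c ` (S - X) - c ` N)) \<le> card (c' ` S)" by (intro card_mono) auto
  moreover have "card (insert L (c ` (S - X) - c ` N)) = card (c ` (S - X)) - card (c ` N) + 1"
  proof -
    have "L \<notin> c ` (S - X) - c ` N" using n0 by (auto simp: L_def)
    moreover have "card (c ` (S - X) - c ` N) = card (c ` (S - X)) - card (c ` N)"
      using N by (intro card_Diff_subset) auto
    ultimately show ?thesis by simp
  qed
  moreover have "card (c ` N) \<le> card (c ` (S - X))" using N by (intro card_mono) auto
  ultimately show ?thesis by linarith
qed

lemma indep_insert:
  assumes sym: "\<And>x y. E x y \<Longrightarrow> E y x" and I: "independent_set E I"
    and nv: "\<forall>z\<in>I. \<not> E v z" and irr: "\<not> E v v"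
  shows "independent_set E (insert v I)"
  unfolding independent_set_def
proof (intro ballI)
  fix x y assume x: "x \<in> insert v I" and y: "y \<in> insert v I"
  show "\<not> E x y"
  proof
    assume Exy: "E x y"
    then have Eyx: "E y x" by (rule sym)
    show False
    proof (cases "x = v")
      case True
      then show False using y Exy nv irr by auto
    next
      case False
      then have "x \<in> I" using x by simp
      show False
      proof (cases "y = v")
        case True then show False using \<open>x \<in> I\<close> Eyx nv by auto
      next
        case False then have "y \<in> I" using y by simp
        then show False using \<open>x \<in> I\<close> I Exy unfolding independent_set_def by blast
      qed
    qed
  qed
qed

lemma path_const:
  assumes "successively E xs" "set xs \<subseteq> T" "nocross E T c" "xs \<noteq> []"
  shows "\<forall>z\<in>set xs. c z = c (hd xs)"
  using assms
proof (induction xs rule: induct_list012)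
  case (3 x y zs)
  then have "\<forall>z\<in>set (y # zs). c z = c y" by auto
  moreover have "c x = c y" using 3(3,4,5) by (auto simp: nocross_def)
  ultimately show ?case by auto
qed auto

lemma key:
  fixes D :: "'n::finite \<Rightarrow> 'n \<Rightarrow> bool"
  assumes ori: "oriented D"
  shows "4 * card S \<le> srk D S + 2 * alph (underlying D) S + pc (underlying D) S + 2 * om (underlying D) S"
proof (induction "card S" arbitrary: S rule: less_induct)
  case less
  define E where "E = underlying D"
  have sym: "\<And>x y. E x y \<Longrightarrow> E y x" by (auto simp: E_def underlying_def)
  have irr: "\<And>x. \<not> E x x" using ori by (auto simp: E_def underlying_def oriented_def)
  show ?case
  proof (cases "S = {}")
    case True then show ?thesis by simp
  next
    case False
    then obtain x0 where x0: "x0 \<in> S" by auto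
    define P where "P xs \<longleftrightarrow> xs \<noteq> [] \<and> distinct xs \<and> set xs \<subseteq> S \<and> successively E xs" for xs
    have P0: "P [x0]" using x0 by (simp add: P_def)
    have Pb: "\<forall>y. P y \<longrightarrow> length y < card S + 1"
    proof (intro allI impI)
      fix y assume "P y"
      then have "card (set y) \<le> card S" by (intro card_mono) (auto simp: P_def)
      then show "length y < card S + 1" using \<open>P y\<close> distinct_card[of y] by (simp add: P_def)
    qed
    obtain xs where xs: "P xs" and xsmax: "\<forall>y. P y \<longrightarrow> length y \<le> length xs"
      using ex_has_greatest_nat[where f=length, OF P0 Pb] by blast
    obtain v ys where vys: "xs = v # ys" using xs by (cases xs) (auto simp: P_def)
    have vS: "v \<in> S" using xs vys by (auto simp: P_def)
    define N where "N = {y\<in>S. E v y}"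
    have NS: "N \<subseteq> set ys"
    proof
      fix y assume "y \<in> N"
      show "y \<in> set ys"
      proof (rule ccontr)
        assume "y \<notin> set ys"
        moreover have "y \<noteq> v" using \<open>y \<in> N\<close> irr by (auto simp: N_def)
        moreover have "E y v" using \<open>y \<in> N\<close> sym[of v y] by (simp add: N_def)
        ultimately have "P (y # xs)" using xs vys \<open>y \<in> N\<close>
          by (auto simp: P_def N_def)
        then show False using xsmax by fastforce
      qed
    qed
    have finN: "finite N" by simp
    have vN: "v \<notin> N" using irr by (auto simp: N_def)
    have IH: "4 * card T \<le> srk D T + 2 * alph E T + pc E T + 2 * om E T" if "T \<subset> S" for T
      using less.hyps[of T] that psubset_card_mono[of S T] by (simp add: E_def)
    have pcv: "pc E S = pc E (S - {v}) + 2 * card N"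
      using pc_del[where E=E, OF sym irr vS] by (simp add: N_def)
    consider "N = {}" | u where "N = {u}" | a b where "a \<in> N" "b \<in> N" "a \<noteq> b"
    proof -
      assume c1: "N = {} \<Longrightarrow> thesis" and c2: "\<And>u. N = {u} \<Longrightarrow> thesis"
        and c3: "\<And>a b. a \<in> N \<Longrightarrow> b \<in> N \<Longrightarrow> a \<noteq> b \<Longrightarrow> thesis"
      show thesis
      proof (cases "N = {}")
        case True then show thesis by (rule c1)
      next
        case False
        then obtain a where a: "a \<in> N" by auto
        show thesis
        proof (cases "N = {a}")
          case True then show thesis by (rule c2)
        next
          case False
          then obtain b where "b \<in> N" "b \<noteq> a" using a by auto
          then show thesis using c3[OF a] by auto
        qed
      qed
    qed
    then show ?thesis
    proof cases
      case 1
      define T where "T = S - {v}"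
      have TS: "T \<subset> S" using vS by (auto simp: T_def)
      have cS: "card S = card T + 1" using vS by (simp add: T_def) (metis Suc_pred card_gt_0_iff empty_iff finite)
      have sr: "srk D T \<le> srk D S" by (rule srk_mono) (auto simp: T_def)
      obtain I where I: "I \<subseteq> T" "independent_set E I" "card I = alph E T" using alph_ex by blast
      have "independent_set E (insert v I)"
        by (rule indep_insert[OF sym I(2) _ irr]) (use I 1 in \<open>auto simp: N_def T_def\<close>)
      then have "card (insert v I) \<le> alph E S" by (rule alph_ge[rotated]) (use I vS T_def in auto)
      moreover have "card (insert v I) = card I + 1" using I by (auto simp: T_def card_insert_if finite_subset)
      ultimately have al: "alph E T + 1 \<le> alph E S" using I by simp
      obtain c where c: "nocross E T c" "card (c ` T) = om E T" using om_ex by blast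
      have "card (c ` (S - {v})) + 1 \<le> om E S + card (c ` {})"
        by (rule merge[where E=E, OF sym]) (use vS c 1 in \<open>auto simp: T_def N_def\<close>)
      then have omv: "om E T + 1 \<le> om E S" using c by (simp add: T_def)
      have "card N = 0" using 1 by simp
      then have "4 * card S \<le> srk D S + 2 * alph E S + pc E S + 2 * om E S"
        using IH[OF TS] sr al omv cS pcv unfolding T_def by linarith
      then show ?thesis by (simp add: E_def)
    next
      case 2
      then have uS: "u \<in> S" and Evu: "E v u" by (auto simp: N_def)
      have only: "\<forall>y\<in>S. E v y \<longrightarrow> y = u" using 2 by (auto simp: N_def)
      have uv: "u \<noteq> v" using Evu irr by auto
      define T where "T = S - {u, v}"
      have TS: "T \<subset> S" using vS by (auto simp: T_def)
      have cS: "card S = card T + 2"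
      proof -
        have "card (S - {u,v}) = card S - card {u,v}" by (rule card_Diff_subset) (use uS vS in auto)
        moreover have "card {u,v} = 2" using uv by simp
        moreover have "card {u,v} \<le> card S" by (rule card_mono) (use uS vS in auto)
        ultimately show ?thesis by (simp add: T_def)
      qed
      have sr: "srk D T + 2 \<le> srk D S"
        unfolding T_def by (rule srk_pendant[OF ori uS vS]) (use Evu only in \<open>auto simp: E_def\<close>)
      obtain I where I: "I \<subseteq> T" "independent_set E I" "card I = alph E T" using alph_ex by blast
      have "independent_set E (insert v I)"
        by (rule indep_insert[OF sym I(2) _ irr]) (use I(1) only in \<open>auto simp: T_def\<close>)
      then have "card (insert v I) \<le> alph E S" by (rule alph_ge[rotated]) (use I vS T_def in auto)
      moreover have "card (insert v I) = card I + 1" using I by (auto simp: T_def card_insert_if finite_subset)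
      ultimately have al: "alph E T + 1 \<le> alph E S" using I by simp
      define N' where "N' = {y\<in>S - {v}. E u y}"
      have pcu: "pc E (S - {v}) = pc E T + 2 * card N'"
        using pc_del[where E=E, OF sym irr, of u "S - {v}"] uS uv by (simp add: N'_def T_def Diff_insert2[symmetric] insert_commute)
      obtain c where c: "nocross E T c" "card (c ` T) = om E T" using om_ex by blast
      have "card (c ` (S - {u,v})) + 1 \<le> om E S + card (c ` N')"
        by (rule merge[where E=E, OF sym]) (use vS uS c only irr in \<open>auto simp: T_def N'_def\<close>)
      moreover have "card (c ` N') \<le> card N'" by (rule card_image_le) simp
      ultimately have omv: "om E T + 1 \<le> om E S + card N'" using c by (simp add: T_def)
      have "card N = 1" using 2 by simp
      then have "4 * card S \<le> srk D S + 2 * alph E S + pc E S + 2 * om E S"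
        using IH[OF TS] sr al omv cS pcv pcu by linarith
      then show ?thesis by (simp add: E_def)
    next
      case 3
      define T where "T = S - {v}"
      have TS: "T \<subset> S" using vS by (auto simp: T_def)
      have cS: "card S = card T + 1" using vS by (simp add: T_def) (metis Suc_pred card_gt_0_iff empty_iff finite)
      have sr: "srk D T \<le> srk D S" by (rule srk_mono) (auto simp: T_def)
      have al: "alph E T \<le> alph E S" by (rule alph_mono) (auto simp: T_def)
      obtain c where c: "nocross E T c" "card (c ` T) = om E T" using om_ex by blast
      have ysT: "set ys \<subseteq> T" "successively E ys" "ys \<noteq> []"
        using xs vys NS 3 by (auto simp: P_def T_def successively_Cons)
      have cab: "c a = c b" using path_const[OF ysT(2) ysT(1) c(1) ysT(3)] NS 3 by (metis subsetD)
      have "card (c ` (S - {v})) + 1 \<le> om E S + card (c ` N)"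
        by (rule merge[where E=E, OF sym]) (use vS c vN in \<open>auto simp: T_def N_def\<close>)
      moreover have "c ` N = c ` (N - {b})"
      proof
        show "c ` N \<subseteq> c ` (N - {b})"
        proof
          fix z assume "z \<in> c ` N"
          then obtain w where w: "w \<in> N" "z = c w" by auto
          show "z \<in> c ` (N - {b})"
          proof (cases "w = b")
            case True then show ?thesis using w 3 cab by (intro image_eqI[of _ _ a]) auto
          next
            case False then show ?thesis using w by auto
          qed
        qed
      qed auto
      moreover have "card (c ` (N - {b})) \<le> card (N - {b})" by (rule card_image_le) simp
      moreover have "card (N - {b}) + 1 = card N" using 3 by (simp add: card_Suc_Diff1) (metis Suc_pred card_gt_0_iff empty_iff finN)
      ultimately have omv: "om E T + 2 \<le> om E S + card N" using c by (simp add: T_def)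
      have "4 * card S \<le> srk D S + 2 * alph E S + pc E S + 2 * om E S"
        using IH[OF TS] sr al omv cS pcv unfolding T_def by linarith
      then show ?thesis by (simp add: E_def)
    qed
  qed
qed

lemma om_conn:
  fixes E :: "'n::finite \<Rightarrow> 'n \<Rightarrow> bool"
  assumes "connected_graph E" shows "om E UNIV \<le> 1"
proof -
  obtain c where c: "nocross E UNIV c" "card (c ` UNIV) = om E UNIV" using om_ex by blast
  have const: "c x = c y" if "E\<^sup>*\<^sup>* x y" for x y
    using that
  proof (induction rule: rtranclp_induct)
    case (step y z) then show ?case using c(1) unfolding nocross_def by simp
  qed simp
  obtain x0 :: 'n where True by simp
  have "c ` UNIV \<subseteq> {c x0}" using const assms unfolding connected_graph_def by auto
  then have "card (c ` UNIV) \<le> card {c x0}" by (intro card_mono) auto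
  then show ?thesis using c by simp
qed

lemma alph_UNIV: "alph E (UNIV::'n::finite set) = independence_number E"
  unfolding alph_def independence_number_def by simp

lemma pc_UNIV:
  fixes E :: "'n::finite \<Rightarrow> 'n \<Rightarrow> bool"
  assumes sym: "\<And>x y. E x y \<Longrightarrow> E y x" and irr: "\<And>x. \<not> E x x"
  shows "pc E UNIV = 2 * num_edges E"
proof -
  define Ed where "Ed = {{x, y} | x y. E x y}"
  define A where "A e = {p. E (fst p) (snd p) \<and> {fst p, snd p} = e}" for e
  have U: "{(x,y). x \<in> UNIV \<and> y \<in> UNIV \<and> E x y} = \<Union>(A ` Ed)"
    by (auto simp: A_def Ed_def; blast)
  have "card (\<Union>(A ` Ed)) = (\<Sum>e\<in>Ed. card (A e))"
    by (rule card_UN_disjoint) (auto simp: A_def)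
  also have "\<dots> = (\<Sum>e\<in>Ed. 2)"
  proof (rule sum.cong[OF refl])
    fix e assume "e \<in> Ed"
    then obtain x y where e: "e = {x,y}" "E x y" by (auto simp: Ed_def)
    have xy: "x \<noteq> y" using e irr by auto
    have "A e = {(x,y), (y,x)}"
    proof
      show "A e \<subseteq> {(x,y), (y,x)}"
      proof
        fix p assume "p \<in> A e"
        then have "{fst p, snd p} = {x, y}" "fst p \<noteq> snd p" using e irr by (auto simp: A_def)
        then show "p \<in> {(x,y), (y,x)}" by (cases p) (auto simp: doubleton_eq_iff)
      qed
      show "{(x,y), (y,x)} \<subseteq> A e" using e sym[of x y] by (auto simp: A_def)
    qed
    then show "card (A e) = 2" using xy by simp
  qed
  finally show ?thesis unfolding pc_def num_edges_def U Ed_def by simp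
qed

lemma card_dist: "card {(x,y). x \<in> I \<and> y \<in> I \<and> x \<noteq> y} = card I * card I - card (I::'n::finite set)"
proof -
  have "{(x,y). x \<in> I \<and> y \<in> I \<and> x \<noteq> y} = I \<times> I - (\<lambda>x. (x,x)) ` I" by auto
  moreover have "card ((\<lambda>x. (x,x)) ` I) = card I" by (rule card_image) (auto simp: inj_on_def)
  moreover have "card (I \<times> I - (\<lambda>x. (x,x)) ` I) = card (I \<times> I) - card ((\<lambda>x. (x,x)) ` I)"
    by (rule card_Diff_subset) auto
  ultimately show ?thesis by (simp add: card_cartesian_product)
qed

lemma pair_bound:
  fixes E :: "'n::finite \<Rightarrow> 'n \<Rightarrow> bool"
  assumes irr: "\<And>x. \<not> E x x" and I: "independent_set E I"
    and Z: "Z \<subseteq> {(x,y). x \<noteq> y \<and> \<not> E x y \<and> \<not> (x \<in> I \<and> y \<in> I)}"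
  shows "pc E UNIV + (card I * card I - card I) + card Z \<le> CARD('n) * CARD('n) - CARD('n)"
proof -
  let ?P = "{(x,y). x \<in> UNIV \<and> y \<in> UNIV \<and> E x y}"
  let ?DI = "{(x,y). x \<in> I \<and> y \<in> I \<and> x \<noteq> y}"
  have "card (?P \<union> ?DI \<union> Z) = card (?P \<union> ?DI) + card Z"
    by (rule card_Un_disjoint) (use Z in auto)
  moreover have "card (?P \<union> ?DI) = card ?P + card ?DI"
    by (rule card_Un_disjoint) (use I in \<open>auto simp: independent_set_def\<close>)
  moreover have "card (?P \<union> ?DI \<union> Z) \<le> card {(x,y). x \<in> (UNIV::'n set) \<and> y \<in> UNIV \<and> x \<noteq> y}"
    by (rule card_mono) (use Z irr in auto)
  ultimately show ?thesis using card_dist[of I] card_dist[of "UNIV::'n set"] by (simp add: pc_def)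
qed

lemma srk_edge:
  fixes D :: "'n::finite \<Rightarrow> 'n \<Rightarrow> bool"
  assumes ori: "oriented D" and e: "underlying D u v"
  shows "2 \<le> skew_rank D"
proof -
  have uv: "u \<noteq> v" using e ori by (auto simp: underlying_def oriented_def)
  have "srk D ({v,u} - {v,u}) + 2 \<le> srk D {v,u}"
    by (rule srk_pendant[OF ori]) (use e ori uv in \<open>auto simp: underlying_def oriented_def\<close>)
  moreover have "srk D {v,u} \<le> srk D UNIV" by (rule srk_mono) auto
  ultimately show ?thesis using srk_UNIV[of D] by simp
qed

lemma arith_core:
  fixes sr a m n :: nat
  assumes K: "4*n \<le> sr + 2*a + 2*m + 2" and Bd: "2*m + (a*a - a) \<le> n*n - n" and a1: "1 \<le> a"
  shows "4 * real n - 2 * real m - sqrt (real n * (real n - 1) - 2 * real m + 1/4) - 5/2 \<le> real sr + real a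
    \<and> (real sr + real a = 4 * real n - 2 * real m - sqrt (real n * (real n - 1) - 2 * real m + 1/4) - 5/2
       \<longleftrightarrow> (sr + 2*a + 2*m + 2 = 4*n \<and> 2*m + (a*a - a) = n*n - n))"
proof -
  define Q where "Q = real n * (real n - 1) - 2 * real m"
  define s where "s = sqrt (Q + 1/4)"
  have nn: "real (n*n - n) = real n * (real n - 1)"
    by (cases n) (auto simp: of_nat_diff algebra_simps)
  have aa: "real (a*a - a) = real a * (real a - 1)"
    by (cases a) (auto simp: of_nat_diff algebra_simps)
  have "real (2*m + (a*a - a)) \<le> real (n*n - n)" using Bd by (simp only: of_nat_le_iff)
  then have "2 * real m + real (a*a - a) \<le> real (n*n - n)" by (simp only: of_nat_add of_nat_mult of_nat_numeral)
  then have Bdr: "real a * (real a - 1) \<le> Q" unfolding Q_def aa nn by linarith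
  have a0: "0 \<le> real a * (real a - 1)" using a1 by (intro mult_nonneg_nonneg) auto
  have sq: "(real a - 1/2)^2 = real a * (real a - 1) + 1/4" by (simp add: power2_eq_square algebra_simps)
  have sge: "real a - 1/2 \<le> s" unfolding s_def by (rule real_le_rsqrt) (use sq Bdr in simp)
  have Kr: "4 * real n \<le> real sr + 2 * real a + 2 * real m + 2" using K by linarith
  have ineq: "4 * real n - 2 * real m - s - 5/2 \<le> real sr + real a" using Kr sge by linarith
  have "real sr + real a = 4 * real n - 2 * real m - s - 5/2 \<longleftrightarrow>
        (real sr + 2 * real a + 2 * real m + 2 = 4 * real n \<and> s = real a - 1/2)"
    using Kr sge by linarith
  also have "s = real a - 1/2 \<longleftrightarrow> Q = real a * (real a - 1)"
  proof
    assume "s = real a - 1/2"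
    then have "s^2 = (real a - 1/2)^2" by simp
    moreover have "s^2 = Q + 1/4" unfolding s_def using Bdr a0
      by (intro real_sqrt_pow2) linarith
    ultimately show "Q = real a * (real a - 1)" using sq by simp
  next
    assume "Q = real a * (real a - 1)"
    then have "(real a - 1/2)^2 = Q + 1/4" using sq by simp
    moreover have "0 \<le> real a - 1/2" using a1 by simp
    ultimately show "s = real a - 1/2" unfolding s_def by (rule real_sqrt_unique)
  qed
  also have "(real sr + 2 * real a + 2 * real m + 2 = 4 * real n \<and> Q = real a * (real a - 1))
     \<longleftrightarrow> (sr + 2*a + 2*m + 2 = 4*n \<and> 2*m + (a*a - a) = n*n - n)"
  proof -
    have "real sr + 2 * real a + 2 * real m + 2 = 4 * real n \<longleftrightarrow> sr + 2*a + 2*m + 2 = 4*n" by linarith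
    moreover have "Q = real a * (real a - 1) \<longleftrightarrow> 2*m + (a*a - a) = n*n - n"
    proof -
      have "2*m + (a*a - a) = n*n - n \<longleftrightarrow> real (2*m + (a*a - a)) = real (n*n - n)" by linarith
      also have "\<dots> \<longleftrightarrow> 2 * real m + real (a*a - a) = real (n*n - n)" by (simp only: of_nat_add of_nat_mult of_nat_numeral)
      also have "\<dots> \<longleftrightarrow> 2 * real m + real a * (real a - 1) = real n * (real n - 1)" unfolding aa nn ..
      finally show ?thesis unfolding Q_def by linarith
    qed
    ultimately show ?thesis by simp
  qed
  finally show ?thesis using ineq unfolding s_def Q_def by simp
qed

lemma eq_cases:
  fixes sr a m n :: nat
  assumes E: "sr + 2*a + 2*m + 2 = 4*n" "2*m + (a*a - a) = n*n - n"
    and sr2: "2 \<le> sr" and a1: "1 \<le> a" and an: "a + 1 \<le> n"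
  shows "a + 1 = n \<or> (n = 3 \<and> a = 1)"
proof -
  obtain q where q: "n = a + q" "1 \<le> q" using an by (metis add.commute le_Suc_ex add_leD1 Suc_eq_plus1 le_add1 le_add_diff_inverse2 add_le_cancel_left)
  have r: "int sr + 2*int a + 2*int m + 2 = 4*(int a + int q)" using E(1) q by simp
  have "int (2*m) + int (a*a - a) = int (n*n - n)" using E(2) by (metis of_nat_add)
  then have r2: "2*int m + (int a*int a - int a) = (int a + int q)*(int a + int q) - (int a + int q)"
    using a1 q by (simp add: of_nat_diff le_square)
  have "int sr = 2*int a*(1 - int q) + 5*int q - int q*int q - 2" using r r2 by (simp add: algebra_simps)
  then have key: "2 \<le> 2*int a*(1 - int q) + 5*int q - int q*int q - 2" using sr2 by linarith
  show ?thesis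
  proof (cases "q = 1")
    case True then show ?thesis using q by simp
  next
    case False
    then have q2: "2 \<le> q" using q by simp
    show ?thesis
    proof (cases "q = 2")
      case True
      then have "a = 1" using key a1 by simp
      then show ?thesis using q True by simp
    next
      case False
      then have q3: "3 \<le> int q" using q2 by simp
      have "(int a - 1) * (1 - int q) \<le> 0" by (rule mult_nonneg_nonpos) (use a1 q3 in auto)
      moreover have "2*int a*(1 - int q) - 2*(1 - int q) = 2 * ((int a - 1) * (1 - int q))"
        by (simp add: algebra_simps)
      ultimately have "2*int a*(1 - int q) \<le> 2*(1 - int q)" by linarith
      then have "2 \<le> 2*(1 - int q) + 5*int q - int q*int q - 2" using key by linarith
      then have "int q * int q \<le> 3 * int q - 2" by (simp add: algebra_simps)
      moreover have "3 * int q \<le> int q * int q" using q3 by (simp add: mult_right_mono)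
      ultimately show ?thesis by linarith
    qed
  qed
qed

lemma skew_diag: "oriented D \<Longrightarrow> skew_adj D $ i $ i = 0"
  by (auto simp: skew_entry oriented_def)

lemma rank_star:
  fixes D :: "'n::finite \<Rightarrow> 'n \<Rightarrow> bool"
  assumes ori: "oriented D" and st: "\<forall>x y. underlying D x y \<longleftrightarrow> x \<noteq> y \<and> (x = w \<or> y = w)"
  shows "skew_rank D \<le> 2"
proof -
  define M where "M = skew_adj D"
  have sub: "rowv D UNIV ` UNIV \<subseteq> span {axis w 1, rowv D UNIV w}"
  proof
    fix r assume "r \<in> rowv D UNIV ` UNIV"
    then obtain i where i: "r = rowv D UNIV i" by auto
    show "r \<in> span {axis w 1, rowv D UNIV w}"
    proof (cases "i = w")
      case True then show ?thesis using i by (simp add: span_base)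
    next
      case False
      have "rowv D UNIV i = (M $ i $ w) *\<^sub>R axis w 1"
      proof -
        have "rowv D UNIV i $ j = ((M $ i $ w) *\<^sub>R axis w (1::real)) $ j" for j
        proof (cases "j = w")
          case True then show ?thesis by (simp add: rowv_def M_def axis_def)
        next
          case False
          then have "\<not> underlying D i j" using st \<open>i \<noteq> w\<close> by auto
          then have "M $ i $ j = 0" using skew_nz[OF ori, of i j] by (simp add: M_def)
          then show ?thesis using False by (simp add: rowv_def M_def axis_def)
        qed
        then show ?thesis by (simp add: vec_eq_iff)
      qed
      then show ?thesis using i by (simp add: span_base span_mul)
    qed
  qed
  have "dim (rowv D UNIV ` UNIV) \<le> card {axis w (1::real), rowv D UNIV w}"
    by (rule dim_le_card[OF sub]) simp
  also have "\<dots> \<le> 2" by (simp add: card_insert_if)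
  finally show ?thesis using srk_UNIV[of D] by (simp add: srk_def)
qed

lemma rank_empty:
  fixes D :: "'n::finite \<Rightarrow> 'n \<Rightarrow> bool"
  assumes "\<forall>x y. \<not> D x y" shows "skew_rank D = 0"
proof -
  have "skew_adj D = 0" using assms by (simp add: skew_adj_def vec_eq_iff)
  then show ?thesis by (simp add: skew_rank_def)
qed

lemma rank_tri:
  fixes D :: "'n::finite \<Rightarrow> 'n \<Rightarrow> bool"
  assumes ori: "oriented D" and tr: "\<forall>x y. underlying D x y \<longleftrightarrow> x \<noteq> y" and c3: "CARD('n) = 3"
  shows "skew_rank D \<le> 2"
proof -
  define M where "M = skew_adj D"
  obtain a b c :: 'n where abc: "UNIV = {a,b,c}" "a \<noteq> b" "b \<noteq> c" "a \<noteq> c"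
  proof -
    have "\<exists>x y z. (UNIV::'n set) = {x, y, z} \<and> x \<noteq> y \<and> y \<noteq> z \<and> x \<noteq> z"
      using c3 card_3_iff[of "UNIV :: 'n set"] by simp
    then show ?thesis using that by blast
  qed
  have anti: "M $ x $ y = - M $ y $ x" for x y unfolding M_def by (rule skew_anti[OF ori])
  have dg: "M $ x $ x = 0" for x unfolding M_def by (rule skew_diag[OF ori])
  have nz: "M $ b $ c \<noteq> 0" using skew_nz[OF ori, of b c] tr abc by (simp add: M_def)
  let ?r = "rowv D UNIV"
  have ra: "?r a = (M $ a $ c / M $ b $ c) *\<^sub>R ?r b - (M $ a $ b / M $ b $ c) *\<^sub>R ?r c"
  proof -
    have "?r a $ j = ((M $ a $ c / M $ b $ c) *\<^sub>R ?r b - (M $ a $ b / M $ b $ c) *\<^sub>R ?r c) $ j" for j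
    proof -
      define p where "p = M $ a $ b"
      define q where "q = M $ a $ c"
      define r where "r = M $ b $ c"
      have rj: "?r x $ j = M $ x $ j" for x by (simp add: rowv_def M_def)
      have r0: "r \<noteq> 0" using nz by (simp add: r_def)
      have "j \<in> {a,b,c}" unfolding abc(1)[symmetric] by (rule UNIV_I)
      then have "j = a \<or> j = b \<or> j = c" by simp
      then have "M $ a $ j = q / r * M $ b $ j - p / r * M $ c $ j"
      proof (elim disjE)
        assume j: "j = a"
        have "M $ b $ a = - p" "M $ c $ a = - q" "M $ a $ a = 0"
          using anti[of b a] anti[of c a] dg[of a] by (simp_all add: p_def q_def)
        then show ?thesis using j r0 by (simp add: field_simps)
      next
        assume j: "j = b"
        have "M $ b $ b = 0" "M $ c $ b = - r" "M $ a $ b = p"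
          using anti[of c b] dg[of b] by (simp_all add: p_def r_def)
        then show ?thesis using j r0 by (simp add: field_simps)
      next
        assume j: "j = c"
        have "M $ c $ c = 0" "M $ b $ c = r" "M $ a $ c = q"
          using dg[of c] by (simp_all add: q_def r_def)
        then show ?thesis using j r0 by (simp add: field_simps)
      qed
      then show ?thesis by (simp add: rj p_def q_def r_def)
    qed
    then show ?thesis by (simp add: vec_eq_iff)
  qed
  have sub: "?r ` UNIV \<subseteq> span {?r b, ?r c}"
  proof
    fix r assume "r \<in> ?r ` UNIV"
    then obtain i where i: "r = ?r i" by auto
    have "i \<in> {a,b,c}" unfolding abc(1)[symmetric] by (rule UNIV_I)
    then have "i = a \<or> i = b \<or> i = c" by simp
    then show "r \<in> span {?r b, ?r c}"
    proof (elim disjE)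
      assume "i = a"
      then show ?thesis using i ra by (simp add: span_base span_mul span_diff)
    qed (use i in \<open>simp_all add: span_base\<close>)
  qed
  have "dim (?r ` UNIV) \<le> card {?r b, ?r c}"
    by (rule dim_le_card[OF sub]) simp
  also have "\<dots> \<le> 2" by (simp add: card_insert_if)
  finally show ?thesis using srk_UNIV[of D] by (simp add: srk_def)
qed

lemma iso_star_from:
  assumes "graph_iso E {0..<CARD('n)} star_graph"
  shows "\<exists>w. \<forall>x y::'n::finite. E x y \<longleftrightarrow> x \<noteq> y \<and> (x = w \<or> y = w)"
proof -
  obtain f where f: "bij_betw f UNIV {0..<CARD('n)}" "\<forall>x y. E x y \<longleftrightarrow> star_graph (f x) (f y)"
    using assms by (auto simp: graph_iso_def)
  have "0 \<in> {0..<CARD('n)}" by simp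
  then obtain w where w: "f w = 0" using f(1) by (metis bij_betw_def imageE)
  have inj: "inj f" using f(1) by (simp add: bij_betw_def)
  have "E x y \<longleftrightarrow> x \<noteq> y \<and> (x = w \<or> y = w)" for x y
    using f(2) w inj by (auto simp: star_graph_def inj_eq) (metis inj_eq)+
  then show ?thesis by blast
qed

lemma iso_star_to:
  fixes E :: "'n::finite \<Rightarrow> 'n \<Rightarrow> bool"
  assumes st: "\<forall>x y. E x y \<longleftrightarrow> x \<noteq> y \<and> (x = w \<or> y = w)"
  shows "graph_iso E {0..<CARD('n)} star_graph"
proof -
  obtain g where g: "bij_betw g (UNIV::'n set) {0..<CARD('n)}"
    using ex_bij_betw_finite_nat[of "UNIV::'n set"] by auto
  have gw: "g w \<in> {0..<CARD('n)}" using g by (auto simp: bij_betw_def)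
  define f where "f = Transposition.transpose (g w) 0 \<circ> g"
  have "bij_betw (Transposition.transpose (g w) 0) {0..<CARD('n)} {0..<CARD('n)}"
    using gw by (intro bij_betw_transpose_iff) auto
  then have bf: "bij_betw f UNIV {0..<CARD('n)}" unfolding f_def using g by (rule bij_betw_trans[rotated])
  have inj: "inj f" using bf by (simp add: bij_betw_def)
  have f0: "f x = 0 \<longleftrightarrow> x = w" for x
  proof -
    have "f w = 0" by (simp add: f_def)
    then show ?thesis using inj by (metis injD)
  qed
  have "E x y \<longleftrightarrow> star_graph (f x) (f y)" for x y
    using st f0 inj by (auto simp: star_graph_def inj_eq)
  then show ?thesis using bf by (auto simp: graph_iso_def)
qed

lemma iso_tri_from:
  assumes "graph_iso E {0..<3::nat} triangle_graph"
  shows "CARD('n::finite) = 3 \<and> (\<forall>x y::'n. E x y \<longleftrightarrow> x \<noteq> y)"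
proof -
  obtain f where f: "bij_betw f (UNIV::'n set) {0..<3}" "\<forall>x y. E x y \<longleftrightarrow> triangle_graph (f x) (f y)"
    using assms by (auto simp: graph_iso_def)
  have "CARD('n) = 3" using bij_betw_same_card[OF f(1)] by simp
  moreover have "inj f" using f(1) by (simp add: bij_betw_def)
  ultimately show ?thesis using f(2) by (auto simp: triangle_graph_def inj_eq)
qed

lemma iso_tri_to:
  fixes E :: "'n::finite \<Rightarrow> 'n \<Rightarrow> bool"
  assumes c3: "CARD('n) = 3" and tr: "\<forall>x y. E x y \<longleftrightarrow> x \<noteq> y"
  shows "graph_iso E {0..<3::nat} triangle_graph"
proof -
  obtain g where g: "bij_betw g (UNIV::'n set) {0..<CARD('n)}"
    using ex_bij_betw_finite_nat[of "UNIV::'n set"] by auto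
  have "inj g" using g by (simp add: bij_betw_def)
  then have "E x y \<longleftrightarrow> triangle_graph (g x) (g y)" for x y
    using tr by (auto simp: triangle_graph_def inj_eq)
  then show ?thesis using g c3 by (auto simp: graph_iso_def)
qed

theorem theorem1p4:
  fixes D :: "'n::finite \<Rightarrow> 'n \<Rightarrow> bool"
  assumes "oriented D"
    and "connected_graph (underlying D)"
  shows "(real (skew_rank D) + real (independence_number (underlying D))
           \<ge> 4 * real CARD('n) - 2 * real (num_edges (underlying D))
             - sqrt (real CARD('n) * (real CARD('n) - 1) - 2 * real (num_edges (underlying D)) + 1/4)
             - 5/2)
         \<and> (real (skew_rank D) + real (independence_number (underlying D))
           = 4 * real CARD('n) - 2 * real (num_edges (underlying D))
             - sqrt (real CARD('n) * (real CARD('n) - 1) - 2 * real (num_edges (underlying D)) + 1/4)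
             - 5/2
         \<longleftrightarrow> graph_iso (underlying D) {0..<CARD('n)} star_graph
             \<or> graph_iso (underlying D) {0..<3::nat} triangle_graph)"
proof -
  note ori = assms(1) and conn = assms(2)
  define E where "E = underlying D"
  have sym: "\<And>x y. E x y \<Longrightarrow> E y x" by (auto simp: E_def underlying_def)
  have irr: "\<And>x. \<not> E x x" using ori by (auto simp: E_def underlying_def oriented_def)
  define n where "n = CARD('n)"
  define sr where "sr = skew_rank D"
  define a where "a = independence_number E"
  define m where "m = num_edges E"
  have pcU: "pc E UNIV = 2 * m" unfolding m_def by (rule pc_UNIV[OF sym irr])
  have alU: "alph E UNIV = a" unfolding a_def by (rule alph_UNIV)
  have K: "4*n \<le> sr + 2*a + 2*m + 2"
  proof -
    have "4 * card (UNIV::'n set) \<le> srk D UNIV + 2 * alph E UNIV + pc E UNIV + 2 * om E UNIV"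
      using key[OF ori, of UNIV] by (simp add: E_def)
    moreover have "om E UNIV \<le> 1" using om_conn conn by (simp add: E_def)
    ultimately show ?thesis using pcU alU srk_UNIV[of D] by (simp add: n_def sr_def)
  qed
  obtain I where I: "independent_set E I" "card I = a" using alph_ex[of UNIV E] alU by auto
  have Bd: "2*m + (a*a - a) \<le> n*n - n"
    using pair_bound[OF irr I(1), of "{}"] pcU I(2) by (simp add: n_def)
  obtain x0 :: 'n where True by simp
  have a1: "1 \<le> a"
  proof -
    have "independent_set E {x0}" using irr by (simp add: independent_set_def)
    then have "card {x0} \<le> alph E UNIV" by (intro alph_ge) auto
    then show ?thesis using alU by simp
  qed
  have AC: "4 * real n - 2 * real m - sqrt (real n * (real n - 1) - 2 * real m + 1/4) - 5/2 \<le> real sr + real a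
    \<and> (real sr + real a = 4 * real n - 2 * real m - sqrt (real n * (real n - 1) - 2 * real m + 1/4) - 5/2
       \<longleftrightarrow> (sr + 2*a + 2*m + 2 = 4*n \<and> 2*m + (a*a - a) = n*n - n))"
    by (rule arith_core[OF K Bd a1])
  have eqv: "(sr + 2*a + 2*m + 2 = 4*n \<and> 2*m + (a*a - a) = n*n - n) \<longleftrightarrow>
     (graph_iso E {0..<n} star_graph \<or> graph_iso E {0..<3::nat} triangle_graph)"
  proof
    assume eq: "sr + 2*a + 2*m + 2 = 4*n \<and> 2*m + (a*a - a) = n*n - n"
    have compl: "x \<in> I \<and> y \<in> I" if "x \<noteq> y" "\<not> E x y" for x y
    proof (rule ccontr)
      assume "\<not> (x \<in> I \<and> y \<in> I)"
      then have "pc E UNIV + (card I * card I - card I) + card {(x,y)} \<le> n * n - n"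
        using pair_bound[OF irr I(1), of "{(x,y)}"] that by (simp add: n_def)
      then show False using eq pcU I(2) by simp
    qed
    show "graph_iso E {0..<n} star_graph \<or> graph_iso E {0..<3::nat} triangle_graph"
    proof (cases "n = 1")
      case True
      then have "\<forall>x y::'n. x = y" 
      proof -
        have "\<exists>z. (UNIV::'n set) = {z}" using card_1_singleton_iff[of "UNIV::'n set"] True by (simp add: n_def)
        then obtain z :: 'n where z: "(UNIV::'n set) = {z}" by blast
        have zz: "x = z" for x :: 'n
        proof -
          have "x \<in> (UNIV::'n set)" by (rule UNIV_I)
          then show ?thesis unfolding z by simp
        qed
        show ?thesis
        proof (intro allI)
          fix x y :: 'n show "x = y" using zz[of x] zz[of y] by simp
        qed
      qed
      then have "\<forall>x y. E x y \<longleftrightarrow> x \<noteq> y \<and> (x = x0 \<or> y = x0)"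
      proof (intro allI)
        fix x y :: 'n assume all: "\<forall>x y::'n. x = y"
        then have "y = x" by blast
        then show "E x y \<longleftrightarrow> x \<noteq> y \<and> (x = x0 \<or> y = x0)" using irr by simp
      qed
      then have "graph_iso E {0..<CARD('n)} star_graph" by (rule iso_star_to)
      then show ?thesis unfolding n_def by (rule disjI1)
    next
      case False
      have "n \<ge> 1" unfolding n_def by simp
      then have n2: "n \<ge> 2" using False by simp
      obtain y0 :: 'n where y0: "y0 \<noteq> x0"
      proof -
        have "\<not> (\<forall>y::'n. y = x0)"
        proof
          assume "\<forall>y::'n. y = x0"
          then have "(UNIV::'n set) = {x0}" by auto
          then have "card (UNIV::'n set) = card {x0}" by (rule arg_cong)
          then have "card (UNIV::'n set) = 1" by simp
          then show False using n2 unfolding n_def by simp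
        qed
        then show ?thesis using that by blast
      qed
      have "E\<^sup>*\<^sup>* x0 y0" using conn by (simp add: connected_graph_def E_def)
      then have "\<exists>u v. E u v" using y0 by (induction rule: converse_rtranclp_induct) auto
      then obtain u v where uv: "E u v" by blast
      have sr2: "2 \<le> sr" unfolding sr_def by (rule srk_edge[OF ori]) (use uv in \<open>simp add: E_def\<close>)
      have an: "a + 1 \<le> n"
      proof -
        have "\<not> (u \<in> I \<and> v \<in> I)" using uv I(1) by (auto simp: independent_set_def)
        then have "I \<subset> UNIV" by auto
        then have "card I < card (UNIV::'n set)" by (rule psubset_card_mono[rotated]) simp
        then show ?thesis using I(2) by (simp add: n_def)
      qed
      have "a + 1 = n \<or> (n = 3 \<and> a = 1)"
        by (rule eq_cases) (use eq sr2 a1 an in auto)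
      then show ?thesis
      proof
        assume an1: "a + 1 = n"
        have "card (UNIV - I) = 1"
          using I(2) an1 by (simp add: card_Diff_subset n_def)
        then obtain w where w: "UNIV - I = {w}" by (auto simp: card_1_singleton_iff)
        have "E x y \<longleftrightarrow> x \<noteq> y \<and> (x = w \<or> y = w)" for x y
        proof
          assume "E x y"
          then have "x \<noteq> y" "\<not> (x \<in> I \<and> y \<in> I)" using irr I(1) by (auto simp: independent_set_def)
          then show "x \<noteq> y \<and> (x = w \<or> y = w)" using w by blast
        next
          assume "x \<noteq> y \<and> (x = w \<or> y = w)"
          moreover have "w \<notin> I" using w by blast
          ultimately show "E x y" using compl by blast
        qed
        then have "\<forall>x y. E x y \<longleftrightarrow> x \<noteq> y \<and> (x = w \<or> y = w)" by blast
        then have "graph_iso E {0..<CARD('n)} star_graph" by (rule iso_star_to)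
        then show ?thesis unfolding n_def by (rule disjI1)
      next
        assume n3: "n = 3 \<and> a = 1"
        have "E x y \<longleftrightarrow> x \<noteq> y" for x y
        proof
          assume "E x y" then show "x \<noteq> y" using irr by auto
        next
          assume xy: "x \<noteq> y"
          show "E x y"
          proof (rule ccontr)
            assume "\<not> E x y"
            then have "x \<in> I" "y \<in> I" using compl xy by auto
            then have "card {x,y} \<le> card I" by (intro card_mono) auto
            then show False using xy n3 I(2) by simp
          qed
        qed
        then have tr: "\<forall>x y. E x y \<longleftrightarrow> x \<noteq> y" by blast
        have c3: "CARD('n) = 3" using n3 unfolding n_def by simp
        have "graph_iso E {0..<3::nat} triangle_graph" by (rule iso_tri_to[OF c3 tr])
        then show ?thesis by (rule disjI2)
      qed
    qed
  next
    assume "graph_iso E {0..<n} star_graph \<or> graph_iso E {0..<3::nat} triangle_graph"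
    then show "sr + 2*a + 2*m + 2 = 4*n \<and> 2*m + (a*a - a) = n*n - n"
    proof
      assume "graph_iso E {0..<n} star_graph"
      then obtain w where st: "\<forall>x y. E x y \<longleftrightarrow> x \<noteq> y \<and> (x = w \<or> y = w)"
        using iso_star_from[of E] unfolding n_def by blast
      have Pset: "{(x,y). x \<in> UNIV \<and> y \<in> UNIV \<and> E x y} = Pair w ` (UNIV - {w}) \<union> (\<lambda>y. (y,w)) ` (UNIV - {w})"
        using st by auto
      have "card (Pair w ` (UNIV - {w}) \<union> (\<lambda>y. (y,w)) ` (UNIV - {w})) =
            card (Pair w ` (UNIV - {w})) + card ((\<lambda>y. (y,w)) ` (UNIV - {w}))"
        by (rule card_Un_disjoint) auto
      moreover have "card (Pair w ` (UNIV - {w})) = n - 1"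
        by (subst card_image) (auto simp: inj_on_def n_def)
      moreover have "card ((\<lambda>y. (y,w)) ` (UNIV - {w})) = n - 1"
        by (subst card_image) (auto simp: inj_on_def n_def)
      ultimately have m1: "2 * m = 2 * (n - 1)" using pcU Pset by (simp add: pc_def)
      have n1: "1 \<le> n" by (simp add: n_def)
      show ?thesis
      proof (cases "n = 1")
        case True
        then have "\<forall>x y::'n. x = y" 
      proof -
        have "\<exists>z. (UNIV::'n set) = {z}" using card_1_singleton_iff[of "UNIV::'n set"] True by (simp add: n_def)
        then obtain z :: 'n where z: "(UNIV::'n set) = {z}" by blast
        have zz: "x = z" for x :: 'n
        proof -
          have "x \<in> (UNIV::'n set)" by (rule UNIV_I)
          then show ?thesis unfolding z by simp
        qed
        show ?thesis
        proof (intro allI)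
          fix x y :: 'n show "x = y" using zz[of x] zz[of y] by simp
        qed
      qed
        then have "\<forall>x y. \<not> D x y"
        proof (intro allI)
          fix x y :: 'n assume all: "\<forall>x y::'n. x = y"
          then have "y = x" by blast
          then show "\<not> D x y" using ori by (auto simp: oriented_def)
        qed
        then have "sr = 0" unfolding sr_def by (rule rank_empty)
        moreover have "a \<le> 1"
        proof -
          have "card I \<le> card (UNIV::'n set)" by (rule card_mono) auto
          then show ?thesis using I(2) True by (simp add: n_def)
        qed
        ultimately show ?thesis using m1 True a1 by simp
      next
        case False
        have "sr \<le> 2" unfolding sr_def by (rule rank_star[OF ori, of w]) (use st in \<open>simp add: E_def\<close>)
        moreover have sr2: "2 \<le> sr"
        proof -
          obtain y :: 'n where "y \<noteq> w"
          proof -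
            have "\<not> (\<forall>y::'n. y = w)"
            proof
              assume "\<forall>y::'n. y = w"
              then have "(UNIV::'n set) = {w}" by auto
              then have "card (UNIV::'n set) = card {w}" by (rule arg_cong)
          then have "card (UNIV::'n set) = 1" by simp
              then show False using False unfolding n_def by simp
            qed
            then show ?thesis using that by blast
          qed
          then have "underlying D w y" using st by (simp add: E_def)
          then show ?thesis unfolding sr_def by (rule srk_edge[OF ori])
        qed
        moreover have "a = n - 1"
        proof -
          have "independent_set E (UNIV - {w})" using st by (auto simp: independent_set_def)
          then have "card (UNIV - {w}) \<le> alph E UNIV" by (intro alph_ge) auto
          then have ge: "n - 1 \<le> a" using alU by (simp add: n_def)
          have "card I \<le> n - 1"
          proof (cases "w \<in> I")
            case True
            then have "I \<subseteq> {w}" using I(1) st by (auto simp: independent_set_def)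
            then have "card I \<le> 1" using card_mono[of "{w}" I] by simp
            then show ?thesis using False n1 by simp
          next
            case False
            then have "I \<subseteq> UNIV - {w}" by auto
            then have "card I \<le> card (UNIV - {w})" by (intro card_mono) auto
            then show ?thesis by (simp add: n_def)
          qed
          then show ?thesis using ge I(2) by simp
        qed
        ultimately show ?thesis using m1 n1 False
        proof -
          assume "sr \<le> 2" "2 \<le> sr" "a = n - 1"
          then have "sr = 2" by simp
          define k where "k = n - 2"
          have k: "n = Suc (Suc k)" using n1 False by (simp add: k_def)
          show ?thesis using \<open>sr = 2\<close> \<open>a = n - 1\<close> m1 k by (simp add: algebra_simps)
        qed
      qed
    next
      assume "graph_iso E {0..<3::nat} triangle_graph"
      then have c3: "CARD('n) = 3" and tr: "\<forall>x y. E x y \<longleftrightarrow> x \<noteq> y" using iso_tri_from[of E] by blast+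
      have "sr \<le> 2" unfolding sr_def by (rule rank_tri[OF ori _ c3]) (use tr in \<open>simp add: E_def\<close>)
      moreover have "2 \<le> sr"
      proof -
        obtain y :: 'n where "y \<noteq> x0"
        proof -
          have "\<not> (\<forall>y::'n. y = x0)"
          proof
            assume "\<forall>y::'n. y = x0"
            then have "(UNIV::'n set) = {x0}" by auto
            then have "card (UNIV::'n set) = card {x0}" by (rule arg_cong)
          then have "card (UNIV::'n set) = 1" by simp
            then show False using c3 by simp
          qed
          then show ?thesis using that by blast
        qed
        then have "underlying D x0 y" using tr by (simp add: E_def)
        then show ?thesis unfolding sr_def by (rule srk_edge[OF ori])
      qed
      moreover have "a = 1"
      proof -
        have "card I \<le> 1" using I(1) tr by (auto simp: independent_set_def card_le_Suc0_iff_eq)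
        then show ?thesis using a1 I(2) by simp
      qed
      moreover have "2 * m = 6"
      proof -
        have "{(x,y). x \<in> UNIV \<and> y \<in> UNIV \<and> E x y} = {(x,y). x \<in> (UNIV::'n set) \<and> y \<in> UNIV \<and> x \<noteq> y}"
          using tr by auto
        then have "pc E UNIV = card (UNIV::'n set) * card (UNIV::'n set) - card (UNIV::'n set)"
          using card_dist[of "UNIV::'n set"] by (simp add: pc_def)
        then show ?thesis using pcU c3 by simp
      qed
      ultimately show ?thesis using c3 by (simp add: n_def)
    qed
  qed
  show ?thesis using AC eqv unfolding n_def sr_def a_def m_def E_def by simp
qed

end
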